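(* Let $N\geq2$, let $|\psi\rangle\in\mathrm{Sym}_N$ be nonzero, and let $n=\lfloor N/2\rfloor+1$. Let $\rho^{(n)}=\mathrm{Tr}_{N-n}(|\psi\rangle\langle\psi|)$ be the reduced operator on the first $n$ qubits (with $\rho^{(N)}=|\psi\rangle\langle\psi|$ if $n=N$). Then there exists a nonzero $|\phi\rangle\in\mathrm{Sym}_n$ with $\rho^{(n)}|\phi\rangle=0$. Consequently, the operator $H=\sum_{i=1}^N h_i$, where $h_i$ is the orthogonal projector onto $\ker(\rho^{(n)})\cap\mathrm{Sym}_n$ acting on qubits $i,i+1,\dots,i+n-1$ (indices mod $N$), is a nonzero positive semidefinite operator with $H|\psi\rangle=0$.
   Context: The one-qubit space is $\mathbb{C}^2$. $\mathrm{Sym}_n\subset(\mathbb{C}^2)^{\otimes n}$ denotes the symmetric subspace (vectors invariant under all permutations of the tensor factors), of dimension $n+1$. *)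

theory Defs
  imports Complex_Main "HOL-Combinatorics.Permutations"
begin

text \<open>n-qubit space (C^2)^{\<otimes>n}: computational basis = bool lists of length n.
  A vector is a function bool list => complex vanishing off length-n lists;
  an operator is a matrix bool list => bool list => complex.\<close>

type_synonym qvec = "bool list \<Rightarrow> complex"
type_synonym qop = "bool list \<Rightarrow> bool list \<Rightarrow> complex"

definition basis :: "nat \<Rightarrow> bool list set" where
  "basis n = {xs. length xs = n}"

definition is_vec :: "nat \<Rightarrow> qvec \<Rightarrow> bool" where
  "is_vec n v \<longleftrightarrow> (\<forall>xs. length xs \<noteq> n \<longrightarrow> v xs = 0)"

definition is_op :: "nat \<Rightarrow> qop \<Rightarrow> bool" where
  "is_op n A \<longleftrightarrow> (\<forall>x y. length x \<noteq> n \<or> length y \<noteq> n \<longrightarrow> A x y = 0)"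

definition sym_vec :: "nat \<Rightarrow> qvec \<Rightarrow> bool" where
  "sym_vec n v \<longleftrightarrow> is_vec n v \<and>
     (\<forall>p xs. p permutes {..<n} \<longrightarrow> length xs = n \<longrightarrow> v (permute_list p xs) = v xs)"

definition app :: "nat \<Rightarrow> qop \<Rightarrow> qvec \<Rightarrow> qvec" where
  "app n A v = (\<lambda>x. if length x = n then (\<Sum>y\<in>basis n. A x y * v y) else 0)"

definition inner :: "nat \<Rightarrow> qvec \<Rightarrow> qvec \<Rightarrow> complex" where
  "inner n u v = (\<Sum>x\<in>basis n. cnj (u x) * v x)"

definition reduced :: "nat \<Rightarrow> nat \<Rightarrow> qvec \<Rightarrow> qop" where
  "reduced N k psi = (\<lambda>x y. if length x = k \<and> length y = k then
      (\<Sum>z\<in>basis (N - k). psi (x @ z) * cnj (psi (y @ z))) else 0)"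

definition is_orth_proj :: "nat \<Rightarrow> qvec set \<Rightarrow> qop \<Rightarrow> bool" where
  "is_orth_proj n K P \<longleftrightarrow> is_op n P \<and>
     (\<forall>x y. P x y = cnj (P y x)) \<and>
     (\<forall>v. is_vec n v \<longrightarrow> app n P v \<in> K) \<and>
     (\<forall>v\<in>K. app n P v = v)"

definition orth_proj :: "nat \<Rightarrow> qvec set \<Rightarrow> qop" where
  "orth_proj n K = (THE P. is_orth_proj n K P)"

text \<open>Embed an n-qubit operator P into N qubits, acting on qubits
  i, i+1, ..., i+n-1 (mod N), 0-based, in that order, identity elsewhere.\<close>
definition window :: "nat \<Rightarrow> nat \<Rightarrow> nat \<Rightarrow> bool list \<Rightarrow> bool list" where
  "window N n i x = map (\<lambda>j. x ! ((i + j) mod N)) [0..<n]"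

definition embed :: "nat \<Rightarrow> nat \<Rightarrow> nat \<Rightarrow> qop \<Rightarrow> qop" where
  "embed N n i P = (\<lambda>x y. if length x = N \<and> length y = N \<and>
       (\<forall>k<N. k \<notin> (\<lambda>j. (i + j) mod N) ` {..<n} \<longrightarrow> x ! k = y ! k)
     then P (window N n i x) (window N n i y) else 0)"

definition psd :: "nat \<Rightarrow> qop \<Rightarrow> bool" where
  "psd n A \<longleftrightarrow> (\<forall>v. is_vec n v \<longrightarrow>
      Im (inner n v (app n A v)) = 0 \<and> Re (inner n v (app n A v)) \<ge> 0)"

end

theory Submission
  imports Defs "HOL-Library.Function_Algebras"
begin

definition sc :: "complex \<Rightarrow> qvec \<Rightarrow> qvec" where
  "sc c f = (\<lambda>x. c * f x)"

interpretation vs: vector_space sc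
  by unfold_locales (auto simp: sc_def fun_eq_iff algebra_simps)

lemma sc_apply: "sc c f x = c * f x" by (simp add: sc_def)

lemma finite_basis[simp]: "finite (basis n)"
proof -
  have "basis n = {xs. set xs \<subseteq> UNIV \<and> length xs = n}" by (auto simp: basis_def)
  thus ?thesis using finite_lists_length_eq[of "UNIV::bool set" n] by simp
qed

lemma in_basis[simp]: "x \<in> basis n \<longleftrightarrow> length x = n" by (simp add: basis_def)

lemma app_apply: "length x = n \<Longrightarrow> app n A v x = (\<Sum>y\<in>basis n. A x y * v y)"
  by (simp add: app_def)

lemma app_out: "length x \<noteq> n \<Longrightarrow> app n A v x = 0"
  by (simp add: app_def)

lemma app_is_vec: "is_vec n (app n A v)"
  by (simp add: is_vec_def app_def)

lemma is_vecD: "is_vec n v \<Longrightarrow> length x \<noteq> n \<Longrightarrow> v x = 0"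
  by (simp add: is_vec_def)

lemma app_add: "app n A (u + v) = app n A u + app n A v"
  by (auto simp: app_def fun_eq_iff algebra_simps sum.distrib)

lemma app_sc: "app n A (sc c v) = sc c (app n A v)"
  by (auto simp: app_def fun_eq_iff algebra_simps sum_distrib_left sc_apply)

lemma app_diff: "app n A (u - v) = app n A u - app n A v"
  by (auto simp: app_def fun_eq_iff algebra_simps sum_subtractf)

lemma app_zero: "app n A 0 = 0"
  by (auto simp: app_def fun_eq_iff)

lemma app_sum: "app n A (\<Sum>i\<in>I. f i) = (\<Sum>i\<in>I. app n A (f i))"
proof (induction I rule: infinite_finite_induct)
  case (infinite I) thus ?case by (metis sum.infinite app_zero)
next
  case empty thus ?case by (metis sum.empty app_zero)
next
  case (insert x F) thus ?case by (metis sum.insert app_add)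
qed

lemma inner_add_right: "inner n u (v + w) = inner n u v + inner n u w"
  by (simp add: inner_def algebra_simps sum.distrib)
lemma inner_diff_right: "inner n u (v - w) = inner n u v - inner n u w"
  by (simp add: inner_def algebra_simps sum_subtractf)
lemma inner_sc_right: "inner n u (sc c v) = c * inner n u v"
  by (simp add: inner_def algebra_simps sum_distrib_left sc_apply)
lemma inner_add_left: "inner n (v + w) u = inner n v u + inner n w u"
  by (simp add: inner_def algebra_simps sum.distrib)
lemma inner_diff_left: "inner n (v - w) u = inner n v u - inner n w u"
  by (simp add: inner_def algebra_simps sum_subtractf)
lemma inner_sc_left: "inner n (sc c v) u = cnj c * inner n v u"
  by (simp add: inner_def algebra_simps sum_distrib_left sc_apply)
lemma inner_cnj: "cnj (inner n u v) = inner n v u"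
  by (simp add: inner_def mult.commute)

lemma inner_self_real: "inner n v v = of_real (\<Sum>x\<in>basis n. (cmod (v x))^2)"
  unfolding inner_def of_real_sum
  by (intro sum.cong refl) (metis complex_norm_square mult.commute of_real_power)

lemma inner_self_zero: "is_vec n v \<Longrightarrow> inner n v v = 0 \<Longrightarrow> v = 0"
proof -
  assume iv: "is_vec n v" and z: "inner n v v = 0"
  hence "(\<Sum>x\<in>basis n. (cmod (v x))^2) = 0" using inner_self_real[of n v] by (metis of_real_eq_0_iff)
  hence "\<forall>x\<in>basis n. (cmod (v x))^2 = 0"
    by (subst (asm) sum_nonneg_eq_0_iff) auto
  thus ?thesis using iv by (auto simp: fun_eq_iff is_vec_def)
qed

definition herm :: "qop \<Rightarrow> bool" where
  "herm P \<longleftrightarrow> (\<forall>x y. P x y = cnj (P y x))"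

lemma herm_cnj: "herm P \<Longrightarrow> cnj (P x y) = P y x"
  unfolding herm_def by (metis complex_cnj_cnj)

lemma herm_adj:
  assumes "herm P"
  shows "inner n (app n P u) v = inner n u (app n P v)"
proof -
  have "inner n (app n P u) v = (\<Sum>x\<in>basis n. \<Sum>y\<in>basis n. cnj (P x y) * cnj (u y) * v x)"
    by (simp add: inner_def app_def sum_distrib_right)
  also have "\<dots> = (\<Sum>y\<in>basis n. \<Sum>x\<in>basis n. cnj (u y) * (P y x * v x))"
    by (subst sum.swap) (intro sum.cong refl, simp add: herm_cnj[OF assms])
  also have "\<dots> = inner n u (app n P v)"
    by (simp add: inner_def app_def sum_distrib_left)
  finally show ?thesis .
qed

lemma is_orth_projD:
  assumes "is_orth_proj n K P"
  shows "is_op n P" "herm P" "\<And>v. is_vec n v \<Longrightarrow> app n P v \<in> K" "\<And>v. v \<in> K \<Longrightarrow> app n P v = v"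
  using assms unfolding is_orth_proj_def herm_def by blast+

lemma app_delta:
  assumes "length y = n"
  shows "app n P (\<lambda>z. if z = y then 1 else 0) x = (if length x = n then P x y else 0)"
  using assms by (simp add: app_def if_distrib cong: if_cong)

lemma proj_comp:
  assumes P: "is_orth_proj n K P" and Q: "is_orth_proj n K Q" and "length x = n" "length y = n"
  shows "(\<Sum>w\<in>basis n. Q x w * P w y) = P x y"
proof -
  define e where "e = (\<lambda>z. if z = y then (1::complex) else 0)"
  have ev: "is_vec n e" using assms by (auto simp: e_def is_vec_def)
  have "app n P e \<in> K" using is_orth_projD(3)[OF P ev] .
  hence "app n Q (app n P e) = app n P e" using is_orth_projD(4)[OF Q] by blast
  hence "app n Q (app n P e) x = app n P e x" by simp
  moreover have "app n Q (app n P e) x = (\<Sum>w\<in>basis n. Q x w * app n P e w)"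
    by (rule app_apply[OF assms(3)])
  moreover have "\<dots> = (\<Sum>w\<in>basis n. Q x w * P w y)"
    by (rule sum.cong[OF refl]) (simp add: e_def app_delta[OF assms(4)])
  moreover have "app n P e x = P x y"
    using assms unfolding e_def by (simp add: app_delta)
  ultimately show ?thesis by simp
qed

lemma proj_unique:
  assumes P: "is_orth_proj n K P" and Q: "is_orth_proj n K Q"
  shows "P = Q"
proof (intro ext)
  fix x y
  show "P x y = Q x y"
  proof (cases "length x = n \<and> length y = n")
    case False thus ?thesis using is_orth_projD(1)[OF P] is_orth_projD(1)[OF Q]
      by (auto simp: is_op_def)
  next
    case True
    have hP: "herm P" and hQ: "herm Q" using P Q by (auto dest: is_orth_projD)
    have "P x y = cnj (P y x)" using herm_cnj[OF hP, of y x] by simp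
    also have "P y x = (\<Sum>w\<in>basis n. Q y w * P w x)" using proj_comp[OF P Q] True by simp
    also have "cnj \<dots> = (\<Sum>w\<in>basis n. P x w * Q w y)"
      by (simp add: herm_cnj[OF hP] herm_cnj[OF hQ] mult.commute)
    also have "\<dots> = Q x y" using proj_comp[OF Q P] True by simp
    finally show ?thesis .
  qed
qed

lemma proj_exists_span:
  assumes "finite B" "\<forall>b\<in>B. is_vec n b"
  shows "\<exists>P. is_orth_proj n (vs.span B) P"
  using assms
proof (induction B rule: finite_induct)
  case empty
  have "is_orth_proj n {0} (\<lambda>x y. 0)"
    by (auto simp: is_orth_proj_def is_op_def app_def fun_eq_iff)
  thus ?case by (metis vs.span_empty)
next
  case (insert b B)
  then obtain P where P: "is_orth_proj n (vs.span B) P" by auto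
  have bv: "is_vec n b" using insert by auto
  have hP: "herm P" and opP: "is_op n P" using P by (auto dest: is_orth_projD)
  define r where "r = b - app n P b"
  have rv: "is_vec n r" using bv app_is_vec[of n P b] by (auto simp: r_def is_vec_def)
  have Pb: "app n P b \<in> vs.span B" using is_orth_projD(3)[OF P bv] .
  have orth: "inner n r s = 0" if "s \<in> vs.span B" for s
  proof -
    have "inner n r s = inner n b s - inner n (app n P b) s" by (simp add: r_def inner_diff_left)
    also have "inner n (app n P b) s = inner n b (app n P s)" using herm_adj[OF hP] .
    also have "app n P s = s" using is_orth_projD(4)[OF P that] .
    finally show ?thesis by simp
  qed
  have sub: "vs.span B \<subseteq> vs.span (insert b B)" by (rule vs.span_mono) auto
  show ?case
  proof (cases "r = 0")
    case True
    hence "b = app n P b" by (simp add: r_def)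
    hence "b \<in> vs.span B" using Pb by simp
    hence "vs.span (insert b B) = vs.span B" by (rule vs.span_redundant)
    thus ?thesis using P by auto
  next
    case False
    define nr where "nr = inner n r r"
    have nr0: "nr \<noteq> 0" using inner_self_zero[OF rv] False by (auto simp: nr_def)
    have cnr: "cnj nr = nr" using inner_cnj[of n r r] by (simp add: nr_def)
    define P' where "P' = (\<lambda>x y. P x y + r x * cnj (r y) / nr)"
    have appP': "app n P' v = app n P v + sc (inner n r v / nr) r" for v
    proof (rule ext)
      fix x show "app n P' v x = (app n P v + sc (inner n r v / nr) r) x"
      proof (cases "length x = n")
        case True
        thus ?thesis
          by (simp add: app_apply P'_def inner_def algebra_simps sum.distrib sum_distrib_left
              sum_divide_distrib sc_apply)
      next
        case False
        thus ?thesis using rv by (simp add: app_out is_vecD sc_apply)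
      qed
    qed
    have rspan: "r \<in> vs.span (insert b B)"
    proof -
      have "b \<in> vs.span (insert b B)" by (rule vs.span_base) simp
      thus ?thesis unfolding r_def using sub Pb by (intro vs.span_diff) auto
    qed
    have "is_orth_proj n (vs.span (insert b B)) P'"
      unfolding is_orth_proj_def
    proof (intro conjI allI impI ballI)
      show "is_op n P'" unfolding is_op_def
      proof (intro allI impI)
        fix x y :: "bool list" assume "length x \<noteq> n \<or> length y \<noteq> n"
        thus "P' x y = 0"
        proof
          assume "length x \<noteq> n" thus ?thesis using opP is_vecD[OF rv] unfolding is_op_def P'_def by simp
        next
          assume "length y \<noteq> n" thus ?thesis using opP is_vecD[OF rv] unfolding is_op_def P'_def by simp
        qed
      qed
    next
      fix x y
      have "P x y = cnj (P y x)" using hP unfolding herm_def by blast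
      thus "P' x y = cnj (P' y x)"
        using cnr by (simp add: P'_def mult.commute)
    next
      fix v assume "is_vec n v"
      show "app n P' v \<in> vs.span (insert b B)"
        unfolding appP'
        by (intro vs.span_add vs.span_scale rspan)
          (use sub is_orth_projD(3)[OF P \<open>is_vec n v\<close>] in auto)
    next
      fix v assume "v \<in> vs.span (insert b B)"
      then obtain k where k: "v - sc k b \<in> vs.span B" by (auto simp: vs.span_insert)
      define s where "s = v - sc k b"
      have s: "s \<in> vs.span B" using k by (simp add: s_def)
      have vs_: "v = s + sc k b" by (simp add: s_def)
      have Ps: "app n P s = s" using is_orth_projD(4)[OF P s] .
      have b_eq: "b = r + app n P b" by (simp add: r_def)
      have irb: "inner n r b = nr"
        using orth[OF Pb] by (subst b_eq) (simp add: inner_add_right nr_def)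
      have irv: "inner n r v = k * nr"
        using orth[OF s] irb by (simp add: vs_ inner_add_right inner_sc_right)
      have APv: "app n P v = s + sc k (app n P b)"
        by (simp only: vs_ app_add app_sc Ps)
      have "app n P' v = app n P v + sc (k * nr / nr) r" by (simp only: appP' irv)
      also have "\<dots> = s + sc k (app n P b) + sc k r" using nr0 by (simp add: APv)
      finally have "app n P' v = s + sc k (app n P b) + sc k r" .
      also have "\<dots> = s + sc k b" by (simp add: r_def fun_eq_iff algebra_simps sc_apply)
      finally show "app n P' v = v" by (simp add: vs_)
    qed
    thus ?thesis by blast
  qed
qed

lemma sum_fun_apply: "(\<Sum>i\<in>I. f i) x = (\<Sum>i\<in>I. (f i) x)"
  by (induction I rule: infinite_finite_induct) auto

definition delta :: "bool list \<Rightarrow> qvec" where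
  "delta y = (\<lambda>z. if z = y then 1 else 0)"

lemma vec_in_span_deltas:
  assumes "is_vec n v"
  shows "v \<in> vs.span (delta ` basis n)"
proof -
  have "v = (\<Sum>y\<in>basis n. sc (v y) (delta y))"
  proof (rule ext)
    fix x
    have "(\<Sum>y\<in>basis n. sc (v y) (delta y)) x = (\<Sum>y\<in>basis n. if x = y then v y else 0)"
      unfolding sum_fun_apply by (intro sum.cong refl) (simp add: sc_apply delta_def)
    also have "\<dots> = (if x \<in> basis n then v x else 0)" by (rule sum.delta') simp
    also have "\<dots> = v x" using assms by (simp add: is_vec_def)
    finally show "v x = (\<Sum>y\<in>basis n. sc (v y) (delta y)) x" by simp
  qed
  also have "\<dots> \<in> vs.span (delta ` basis n)"
    by (rule vs.span_sum, rule vs.span_scale, rule vs.span_base, rule imageI)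
  finally show ?thesis .
qed

lemma proj_exists:
  assumes "vs.subspace K" "\<forall>v\<in>K. is_vec n v"
  shows "\<exists>P. is_orth_proj n K P"
proof -
  obtain B where B: "B \<subseteq> K" "vs.independent B" "K \<subseteq> vs.span B" "card B = vs.dim K"
    by (rule vs.basis_exists)
  have sub: "B \<subseteq> vs.span (delta ` basis n)"
  proof
    fix b assume "b \<in> B"
    hence "b \<in> K" using B(1) by (rule subsetD[rotated])
    hence "is_vec n b" using assms(2) by (rule bspec[rotated])
    thus "b \<in> vs.span (delta ` basis n)" by (rule vec_in_span_deltas)
  qed
  have fB: "finite B"
    using vs.independent_span_bound[OF finite_imageI[OF finite_basis] B(2) sub] by (rule conjunct1)
  have eq: "vs.span B = K" using vs.span_subspace[OF B(1) B(3) assms(1)] .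
  have "\<forall>b\<in>B. is_vec n b"
  proof
    fix b assume "b \<in> B"
    hence "b \<in> K" using B(1) by (rule subsetD[rotated])
    thus "is_vec n b" using assms(2) by (rule bspec[rotated])
  qed
  from proj_exists_span[OF fB this] show ?thesis unfolding eq .
qed

lemma orth_proj_is:
  assumes "vs.subspace K" "\<forall>v\<in>K. is_vec n v"
  shows "is_orth_proj n K (orth_proj n K)"
proof -
  obtain P where P: "is_orth_proj n K P" using proj_exists[OF assms] by blast
  have "orth_proj n K = P" unfolding orth_proj_def
  proof (rule the_equality)
    show "is_orth_proj n K P" by (rule P)
  next
    fix Q assume "is_orth_proj n K Q" thus "Q = P" by (rule proj_unique[OF _ P])
  qed
  thus ?thesis using P by simp
qed


lemma count_list_replicate: "count_list (replicate k a) b = (if a = b then k else 0)"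
  by (induction k) auto

lemma count_list_bool: "count_list z False + count_list z True = length (z::bool list)"
  by (induction z) auto

lemma sym_mset:
  assumes "sym_vec N psi" "mset a = mset b" "length b = N"
  shows "psi a = psi b"
proof -
  obtain p where p: "p permutes {..<length b}" "permute_list p b = a"
    using mset_eq_permutation[OF assms(2)] by blast
  thus ?thesis using assms unfolding sym_vec_def by metis
qed

definition canon :: "bool list \<Rightarrow> bool list" where
  "canon z = replicate (count_list z False) False @ replicate (count_list z True) True"

lemma mset_canon: "mset (canon z) = mset z"
proof (rule multiset_eqI)
  fix b show "count (mset (canon z)) b = count (mset z) b"
    by (cases b) (auto simp: canon_def count_mset count_list_replicate)
qed

lemma canon_range:
  assumes "length z = m"
  shows "canon z \<in> (\<lambda>k. replicate k False @ replicate (m - k) True) ` {0..m}"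
proof -
  have "count_list z True = m - count_list z False" "count_list z False \<le> m"
    using count_list_bool[of z] assms by auto
  thus ?thesis unfolding canon_def by auto
qed

definition dicke :: "nat \<Rightarrow> nat \<Rightarrow> qvec" where
  "dicke n k = (\<lambda>x. if length x = n \<and> count_list x True = k then 1 else 0)"

definition wit :: "nat \<Rightarrow> nat \<Rightarrow> bool list" where
  "wit n k = replicate k True @ replicate (n - k) False"

lemma wit_props: "k \<le> n \<Longrightarrow> length (wit n k) = n \<and> count_list (wit n k) True = k"
  by (simp add: wit_def count_list_replicate)

lemma dicke_wit: "k \<le> n \<Longrightarrow> dicke n j (wit n k) = (if j = k then 1 else 0)"
  using wit_props[of k n] by (auto simp: dicke_def)

lemma sym_dicke: "sym_vec n (dicke n k)"
  unfolding sym_vec_def is_vec_def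
proof (intro conjI allI impI)
  fix p and xs :: "bool list" assume "p permutes {..<n}" "length xs = n"
  hence "mset (permute_list p xs) = mset xs" by simp
  hence "count_list (permute_list p xs) True = count_list xs True"
    by (metis count_mset)
  thus "dicke n k (permute_list p xs) = dicke n k xs" by (simp add: dicke_def)
qed (auto simp: dicke_def)

lemma inj_dicke: "inj_on (dicke n) {0..n}"
  by (rule inj_onI) (metis atLeastAtMost_iff dicke_wit zero_neq_one)

lemma indep_dicke: "vs.independent (dicke n ` {0..n})"
proof (rule vs.independent_if_scalars_zero)
  show "finite (dicke n ` {0..n})" by simp
next
  fix c v
  assume z: "(\<Sum>v\<in>dicke n ` {0..n}. sc (c v) v) = 0" and v: "v \<in> dicke n ` {0..n}"
  then obtain k where k: "k \<in> {0..n}" "v = dicke n k" by auto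
  have "0 = (\<Sum>v\<in>dicke n ` {0..n}. sc (c v) v) (wit n k)" using z by simp
  also have "\<dots> = (\<Sum>j\<in>{0..n}. c (dicke n j) * dicke n j (wit n k))"
    by (simp add: sum_fun_apply sc_apply sum.reindex[OF inj_dicke])
  also have "\<dots> = (\<Sum>j\<in>{0..n}. if j = k then c (dicke n k) else 0)"
    using k by (intro sum.cong refl) (simp add: dicke_wit)
  also have "\<dots> = c (dicke n k)" using k by simp
  finally show "c v = 0" using k by simp
qed

lemma sym_subspace: "vs.subspace {phi. sym_vec n phi}"
  unfolding vs.subspace_def
  by (auto simp: sym_vec_def is_vec_def sc_apply)

lemma rho_app:
  assumes "length x = n"
  shows "app n (reduced N n psi) phi x =
    (\<Sum>z\<in>basis (N - n). sc (\<Sum>y\<in>basis n. cnj (psi (y @ z)) * phi y)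
        (\<lambda>x. if length x = n then psi (x @ z) else 0) x)"
proof -
  have "app n (reduced N n psi) phi x =
     (\<Sum>y\<in>basis n. \<Sum>z\<in>basis (N - n). psi (x @ z) * cnj (psi (y @ z)) * phi y)"
    unfolding app_apply[OF assms] by (intro sum.cong refl) (simp add: reduced_def assms sum_distrib_right)
  also have "\<dots> = (\<Sum>z\<in>basis (N - n). \<Sum>y\<in>basis n. psi (x @ z) * cnj (psi (y @ z)) * phi y)"
    by (rule sum.swap)
  also have "\<dots> = (\<Sum>z\<in>basis (N - n). sc (\<Sum>y\<in>basis n. cnj (psi (y @ z)) * phi y)
        (\<lambda>x. if length x = n then psi (x @ z) else 0) x)"
    by (intro sum.cong refl) (simp add: sc_apply assms sum_distrib_left sum_distrib_right mult.commute mult.left_commute)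
  finally show ?thesis .
qed

lemma rho_app_span:
  "app n (reduced N n psi) phi \<in>
     vs.span ((\<lambda>z. (\<lambda>x. if length x = n then psi (x @ z) else 0)) ` basis (N - n))"
proof -
  have "app n (reduced N n psi) phi =
    (\<Sum>z\<in>basis (N - n). sc (\<Sum>y\<in>basis n. cnj (psi (y @ z)) * phi y)
        (\<lambda>x. if length x = n then psi (x @ z) else 0))"
  proof (rule ext)
    fix x show "app n (reduced N n psi) phi x = (\<Sum>z\<in>basis (N - n). sc (\<Sum>y\<in>basis n. cnj (psi (y @ z)) * phi y)
        (\<lambda>x. if length x = n then psi (x @ z) else 0)) x"
      by (cases "length x = n") (simp_all add: rho_app sum_fun_apply app_out sc_apply)
  qed
  also have "\<dots> \<in> vs.span ((\<lambda>z. (\<lambda>x. if length x = n then psi (x @ z) else 0)) ` basis (N - n))"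
    by (intro vs.span_sum vs.span_scale vs.span_base) auto
  finally show ?thesis .
qed

lemma kernel_exists:
  assumes N2: "N \<ge> 2" and sym: "sym_vec N psi" and nd: "n = N div 2 + 1"
  shows "\<exists>phi. sym_vec n phi \<and> phi \<noteq> 0 \<and> app n (reduced N n psi) phi = 0"
proof (rule ccontr)
  assume H0: "\<not> ?thesis"
  have H: "phi = 0" if "sym_vec n phi" "app n (reduced N n psi) phi = 0" for phi
    using H0 that by blast
  define m where "m = N - n"
  have nm: "n + m = N" using N2 nd by (simp add: m_def)
  define f where "f = app n (reduced N n psi)"
  define vz where "vz = (\<lambda>z. (\<lambda>x::bool list. if length x = n then psi (x @ z) else 0))"
  define U where "U = (\<lambda>k. vz (replicate k False @ replicate (m - k) True)) ` {0..m}"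
  have cU: "card U \<le> m + 1" unfolding U_def using card_image_le[of "{0..m}"] by simp
  have VU: "vz ` basis m \<subseteq> U"
  proof
    fix v assume "v \<in> vz ` basis m"
    then obtain z where z: "length z = m" "v = vz z" by auto
    have "vz z = vz (canon z)"
    proof (rule ext)
      fix x show "vz z x = vz (canon z) x"
      proof (cases "length x = n")
        case True
        have "psi (x @ canon z) = psi (x @ z)"
          by (rule sym_mset[OF sym]) (use True z nm mset_canon[of z] in auto)
        thus ?thesis by (simp add: vz_def)
      qed (simp add: vz_def)
    qed
    thus "v \<in> U" using canon_range[OF z(1)] z(2) unfolding U_def by auto
  qed
  define D where "D = dicke n ` {0..n}"
  have DS: "vs.span D \<subseteq> {phi. sym_vec n phi}"
    by (rule vs.span_minimal[OF _ sym_subspace]) (auto simp: D_def sym_dicke)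
  have inj: "inj_on f (vs.span D)"
  proof (rule inj_onI)
    fix a b assume ab: "a \<in> vs.span D" "b \<in> vs.span D" "f a = f b"
    have "a - b \<in> vs.span D" using ab by (intro vs.span_diff)
    hence "sym_vec n (a - b)" using DS by auto
    moreover have "f (a - b) = 0" using ab by (simp add: f_def app_diff)
    ultimately have "a - b = 0" using H unfolding f_def by blast
    thus "a = b" by simp
  qed
  have injD: "inj_on f D" using inj vs.span_superset by (rule inj_on_subset)
  have indD: "vs.independent D" unfolding D_def by (rule indep_dicke)
  have indf: "vs.independent (f ` D)"
  proof (rule vs.independent_if_scalars_zero)
    show "finite (f ` D)" by (simp add: D_def)
  next
    fix c v
    assume z: "(\<Sum>v\<in>f ` D. sc (c v) v) = 0" and v: "v \<in> f ` D"
    have "(\<Sum>d\<in>D. sc (c (f d)) (f d)) = 0"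
      using z sum.reindex[OF injD, of "\<lambda>v. sc (c v) v"] by simp
    hence "f (\<Sum>d\<in>D. sc (c (f d)) d) = f 0"
      by (simp add: f_def app_sum app_sc app_zero)
    moreover have "(\<Sum>d\<in>D. sc (c (f d)) d) \<in> vs.span D"
      by (intro vs.span_sum vs.span_scale vs.span_base)
    ultimately have "(\<Sum>d\<in>D. sc (c (f d)) d) = 0"
      by (rule inj_onD[OF inj _ _ vs.span_zero])
    moreover have "finite D" by (simp add: D_def)
    ultimately have "\<forall>d\<in>D. c (f d) = 0"
      using indD unfolding vs.independent_explicit_finite_subsets
      by (metis order_refl)
    thus "c v = 0" using v by auto
  qed
  have "f ` D \<subseteq> vs.span (vz ` basis m)"
    using rho_app_span[of n N psi] unfolding f_def vz_def m_def by blast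
  also have "\<dots> \<subseteq> vs.span U" using VU by (rule vs.span_mono)
  finally have "card (f ` D) \<le> card U"
    using vs.independent_span_bound[OF _ indf] by (simp add: U_def)
  moreover have "card (f ` D) = n + 1"
    using card_image[OF injD] card_image[OF inj_dicke[of n]] by (simp add: D_def)
  ultimately show False using cU nd nm by linarith
qed


lemma mset_rotate1: "mset (rotate1 xs) = mset xs"
  by (cases xs) auto

lemma mset_rotate: "mset (rotate k xs) = mset xs"
  by (induction k) (simp_all add: rotate_def mset_rotate1)

lemma rotate_inv:
  assumes "length x = N" "N > 0"
  shows "rotate i (rotate (N - i mod N) x) = x" "rotate (N - i mod N) (rotate i x) = x"
proof -
  have "(N - i mod N + i) mod N = 0"
  proof -
    have e: "N * (i div N) + i mod N = i" by (rule mult_div_mod_eq)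
    have "i mod N < N" using assms(2) by simp
    hence "N - i mod N + i = N * (i div N) + N" using e by linarith
    thus ?thesis by simp
  qed
  hence "rotate (N - i mod N + i) x = x" "rotate (i + (N - i mod N)) x = x"
    using assms by (metis rotate_conv_mod rotate0 id_apply add.commute)+
  thus "rotate i (rotate (N - i mod N) x) = x" "rotate (N - i mod N) (rotate i x) = x"
    by (simp_all add: rotate_rotate)
qed

lemma bij_rotate:
  assumes "N > 0"
  shows "bij_betw (rotate k) (basis N) (basis N)"
  by (rule bij_betw_byWitness[where f' = "rotate (N - k mod N)"])
     (auto simp add: rotate_inv[OF _ assms])

lemma window_eq:
  assumes "length x = N" "n \<le> N"
  shows "window N n i x = take n (rotate i x)"
  using assms by (intro nth_equalityI) (auto simp: window_def nth_rotate)

lemma mod_pre: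
  fixes i k N :: nat
  assumes "k < N"
  shows "(i + (k + (N - i mod N))) mod N = k"
proof -
  have e: "N * (i div N) + i mod N = i" by (rule mult_div_mod_eq)
  have "i mod N < N" using assms by simp
  moreover have "(i div N + 1) * N = N * (i div N) + N" by (simp add: algebra_simps)
  ultimately have "i + (k + (N - i mod N)) = k + (i div N + 1) * N" using e by linarith
  thus ?thesis by (simp only: mod_mult_self1 mod_less[OF assms])
qed

lemma mod_back:
  fixes i j N :: nat
  assumes "j < N"
  shows "((i + j) mod N + (N - i mod N)) mod N = j"
proof -
  have "((i + j) mod N + (N - i mod N)) mod N = (i + (j + (N - i mod N))) mod N"
    by (simp only: mod_add_left_eq add.assoc)
  thus ?thesis using mod_pre[OF assms, of i] by (simp only:)
qed

lemma mod_inj: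
  fixes i j1 j2 N :: nat
  assumes "j1 < N" "j2 < N" "(i + j1) mod N = (i + j2) mod N"
  shows "j1 = j2"
proof -
  have "j1 = ((i + j1) mod N + (N - i mod N)) mod N" by (rule mod_back[OF assms(1), symmetric])
  also have "\<dots> = ((i + j2) mod N + (N - i mod N)) mod N" by (simp only: assms(3))
  also have "\<dots> = j2" by (rule mod_back[OF assms(2)])
  finally show ?thesis .
qed

lemma offwin_eq:
  assumes "length x = N" "length y = N" "n \<le> N"
  shows "(\<forall>k<N. k \<notin> (\<lambda>j. (i + j) mod N) ` {..<n} \<longrightarrow> x ! k = y ! k)
     \<longleftrightarrow> drop n (rotate i x) = drop n (rotate i y)"
proof
  assume h: "\<forall>k<N. k \<notin> (\<lambda>j. (i + j) mod N) ` {..<n} \<longrightarrow> x ! k = y ! k"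
  show "drop n (rotate i x) = drop n (rotate i y)"
  proof (rule nth_equalityI)
    show "length (drop n (rotate i x)) = length (drop n (rotate i y))" using assms by simp
  next
    fix j assume "j < length (drop n (rotate i x))"
    hence j: "n + j < N" using assms by simp
    have N0: "N > 0" using j by simp
    have "(i + (n + j)) mod N \<notin> (\<lambda>j. (i + j) mod N) ` {..<n}"
    proof
      assume "(i + (n + j)) mod N \<in> (\<lambda>j. (i + j) mod N) ` {..<n}"
      then obtain j' where j': "j' < n" "(i + (n + j)) mod N = (i + j') mod N" by auto
      hence "n + j = j'" using j j' by (intro mod_inj[of "n + j" N j' i]) auto
      thus False using j j' by simp
    qed
    hence "x ! ((i + (n + j)) mod N) = y ! ((i + (n + j)) mod N)" using h N0 by auto
    thus "drop n (rotate i x) ! j = drop n (rotate i y) ! j"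
      using assms j by (simp add: nth_rotate)
  qed
next
  assume h: "drop n (rotate i x) = drop n (rotate i y)"
  show "\<forall>k<N. k \<notin> (\<lambda>j. (i + j) mod N) ` {..<n} \<longrightarrow> x ! k = y ! k"
  proof (intro allI impI)
    fix k assume k: "k < N" "k \<notin> (\<lambda>j. (i + j) mod N) ` {..<n}"
    define j where "j = (k + (N - i mod N)) mod N"
    have jN: "j < N" using k by (simp add: j_def)
    have ij: "(i + j) mod N = k" unfolding j_def using mod_pre[OF k(1)]
      by (metis mod_add_right_eq)
    have "\<not> j < n" using k ij by auto
    hence "drop n (rotate i x) ! (j - n) = drop n (rotate i y) ! (j - n)" using h by simp
    hence "rotate i x ! j = rotate i y ! j" using jN assms \<open>\<not> j < n\<close> by simp
    thus "x ! k = y ! k" using jN assms ij by (simp add: nth_rotate)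
  qed
qed

lemma td_app[simp]: "length a = n \<Longrightarrow> take n (a @ c) = a"  "length a = n \<Longrightarrow> drop n (a @ c) = c"
  by simp_all

definition Fop :: "nat \<Rightarrow> nat \<Rightarrow> qop \<Rightarrow> qop" where
  "Fop N n P a b = (if length a = N \<and> length b = N \<and> drop n a = drop n b
     then P (take n a) (take n b) else 0)"

lemma embed_eq:
  assumes "N > 0" "n \<le> N"
  shows "embed N n i P x y = Fop N n P (rotate i x) (rotate i y)"
proof (cases "length x = N \<and> length y = N")
  case True
  thus ?thesis using assms offwin_eq[of x N y n i] window_eq[of _ N n i]
    by (simp add: embed_def Fop_def)
qed (auto simp: embed_def Fop_def)

lemma split_sum:
  assumes "n \<le> N"
  shows "(\<Sum>x\<in>basis N. g x) = (\<Sum>a\<in>basis n. \<Sum>c\<in>basis (N - n). g (a @ c))"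
proof -
  have b: "bij_betw (\<lambda>(a, c). a @ c) (basis n \<times> basis (N - n)) (basis N)"
    by (rule bij_betw_byWitness[where f' = "\<lambda>x. (take n x, drop n x)"]) (use assms in auto)
  have "(\<Sum>x\<in>basis N. g x) = (\<Sum>p\<in>basis n \<times> basis (N - n). g (case p of (a, c) \<Rightarrow> a @ c))"
    by (rule sum.reindex_bij_betw[OF b, symmetric])
  also have "\<dots> = (\<Sum>(a, c)\<in>basis n \<times> basis (N - n). g (a @ c))"
    by (intro sum.cong refl) (auto split: prod.splits)
  also have "\<dots> = (\<Sum>a\<in>basis n. \<Sum>c\<in>basis (N - n). g (a @ c))"
    by (rule sum.cartesian_product[symmetric])
  finally show ?thesis .
qed

lemma F_app:
  assumes "length x = N" "n \<le> N"
  shows "(\<Sum>y\<in>basis N. Fop N n P x y * w y) =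
     app n P (\<lambda>a. if length a = n then w (a @ drop n x) else 0) (take n x)"
proof -
  have "(\<Sum>y\<in>basis N. Fop N n P x y * w y) =
     (\<Sum>b\<in>basis n. \<Sum>c\<in>basis (N - n). Fop N n P x (b @ c) * w (b @ c))"
    by (rule split_sum[OF assms(2)])
  also have "\<dots> = (\<Sum>b\<in>basis n. \<Sum>c\<in>basis (N - n).
      (if drop n x = c then P (take n x) b * w (b @ drop n x) else 0))"
    using assms by (intro sum.cong refl) (auto simp: Fop_def)
  also have "\<dots> = (\<Sum>b\<in>basis n. P (take n x) b * w (b @ drop n x))"
    using assms by (simp add: sum.delta)
  also have "\<dots> = app n P (\<lambda>a. if length a = n then w (a @ drop n x) else 0) (take n x)"
    using assms by (simp add: app_apply)
  finally show ?thesis .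
qed

lemma F_psd:
  assumes "psd n P" "n \<le> N"
  shows "Im (\<Sum>x\<in>basis N. cnj (w x) * (\<Sum>y\<in>basis N. Fop N n P x y * w y)) = 0 \<and>
         Re (\<Sum>x\<in>basis N. cnj (w x) * (\<Sum>y\<in>basis N. Fop N n P x y * w y)) \<ge> 0"
proof -
  define wc where "wc = (\<lambda>c a. if length a = n then w (a @ c) else (0::complex))"
  have wcv: "is_vec n (wc c)" for c by (simp add: wc_def is_vec_def)
  have "(\<Sum>x\<in>basis N. cnj (w x) * (\<Sum>y\<in>basis N. Fop N n P x y * w y)) =
     (\<Sum>a\<in>basis n. \<Sum>c\<in>basis (N - n). cnj (w (a @ c)) *
        (\<Sum>y\<in>basis N. Fop N n P (a @ c) y * w y))"
    by (rule split_sum[OF assms(2)])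
  also have "\<dots> = (\<Sum>a\<in>basis n. \<Sum>c\<in>basis (N - n). cnj (wc c a) * app n P (wc c) a)"
  proof (intro sum.cong refl)
    fix a c assume a: "a \<in> basis n" and c: "c \<in> basis (N - n)"
    have len: "length (a @ c) = N" using a c assms(2) by simp
    have d: "drop n (a @ c) = c" "take n (a @ c) = a" using a by simp_all
    have "(\<Sum>y\<in>basis N. Fop N n P (a @ c) y * w y) = app n P (wc c) a"
      using F_app[OF len assms(2), of P w] unfolding d wc_def .
    thus "cnj (w (a @ c)) * (\<Sum>y\<in>basis N. Fop N n P (a @ c) y * w y) =
        cnj (wc c a) * app n P (wc c) a" using a by (simp add: wc_def)
  qed
  also have "\<dots> = (\<Sum>c\<in>basis (N - n). inner n (wc c) (app n P (wc c)))"
    by (subst sum.swap) (simp add: inner_def)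
  finally have eq: "(\<Sum>x\<in>basis N. cnj (w x) * (\<Sum>y\<in>basis N. Fop N n P x y * w y)) =
      (\<Sum>c\<in>basis (N - n). inner n (wc c) (app n P (wc c)))" .
  have "Im (inner n (wc c) (app n P (wc c))) = 0 \<and> Re (inner n (wc c) (app n P (wc c))) \<ge> 0" for c
    using assms(1) wcv unfolding psd_def by blast
  thus ?thesis unfolding eq by (simp add: Im_sum Re_sum sum_nonneg)
qed

lemma app_embed:
  assumes "N > 0" "n \<le> N"
  shows "app N (embed N n i P) v x = (if length x = N then
     (\<Sum>y\<in>basis N. Fop N n P (rotate i x) y * v (rotate (N - i mod N) y)) else 0)"
proof (cases "length x = N")
  case True
  have "app N (embed N n i P) v x = (\<Sum>y\<in>basis N. Fop N n P (rotate i x) (rotate i y) * v y)"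
    using True assms by (simp add: app_apply embed_eq)
  also have "\<dots> = (\<Sum>y\<in>basis N. Fop N n P (rotate i x) (rotate i (rotate (N - i mod N) y)) *
       v (rotate (N - i mod N) y))"
    by (rule sum.reindex_bij_betw[OF bij_rotate[OF assms(1)], symmetric])
  also have "\<dots> = (\<Sum>y\<in>basis N. Fop N n P (rotate i x) y * v (rotate (N - i mod N) y))"
    by (intro sum.cong refl) (simp add: rotate_inv[OF _ assms(1)])
  finally show ?thesis using True by simp
qed (simp add: app_out)

lemma embed_psd:
  assumes "N > 0" "n \<le> N" "psd n P"
  shows "Im (inner N v (app N (embed N n i P) v)) = 0 \<and> Re (inner N v (app N (embed N n i P) v)) \<ge> 0"
proof -
  define r :: "bool list \<Rightarrow> bool list" where "r = rotate (N - i mod N)"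
  define w where "w = (\<lambda>y. v (r y))"
  have "inner N v (app N (embed N n i P) v) =
     (\<Sum>x\<in>basis N. cnj (v x) * (\<Sum>y\<in>basis N. Fop N n P (rotate i x) y * w y))"
    unfolding inner_def using assms by (intro sum.cong refl) (simp add: app_embed w_def r_def)
  also have "\<dots> = (\<Sum>x\<in>basis N. cnj (v (r x)) * (\<Sum>y\<in>basis N. Fop N n P (rotate i (r x)) y * w y))"
    unfolding r_def by (rule sum.reindex_bij_betw[OF bij_rotate[OF assms(1)], symmetric])
  also have "\<dots> = (\<Sum>x\<in>basis N. cnj (w x) * (\<Sum>y\<in>basis N. Fop N n P x y * w y))"
    by (intro sum.cong refl) (simp add: rotate_inv[OF _ assms(1)] w_def r_def)
  finally show ?thesis using F_psd[OF assms(3) assms(2), of w] by simp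
qed


lemma proj_idem_inner:
  assumes P: "is_orth_proj n K P" and v: "is_vec n v"
  shows "inner n v (app n P v) = inner n (app n P v) (app n P v)"
proof -
  have "app n P (app n P v) = app n P v"
    using is_orth_projD(4)[OF P is_orth_projD(3)[OF P v]] .
  hence "inner n v (app n P v) = inner n v (app n P (app n P v))" by simp
  also have "\<dots> = inner n (app n P v) (app n P v)"
    using herm_adj[OF is_orth_projD(2)[OF P]] by simp
  finally show ?thesis .
qed

lemma proj_psd:
  assumes P: "is_orth_proj n K P"
  shows "psd n P"
  unfolding psd_def
proof (intro allI impI)
  fix v assume v: "is_vec n v"
  show "Im (inner n v (app n P v)) = 0 \<and> 0 \<le> Re (inner n v (app n P v))"
    unfolding proj_idem_inner[OF P v] inner_self_real by (simp add: sum_nonneg)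
qed

lemma proj_kill:
  assumes P: "is_orth_proj n K P" and v: "is_vec n v" and o: "\<forall>k\<in>K. inner n k v = 0"
  shows "app n P v = 0"
proof -
  have "app n P v \<in> K" using is_orth_projD(3)[OF P v] .
  hence "inner n (app n P v) v = 0" using o by blast
  hence "inner n v (app n P v) = 0" using inner_cnj[of n "app n P v" v] by simp
  hence "inner n (app n P v) (app n P v) = 0" using proj_idem_inner[OF P v] by simp
  thus ?thesis using inner_self_zero[OF app_is_vec] by blast
qed

lemma proj_diag:
  assumes P: "is_orth_proj n K P" and a: "length a = n"
  shows "P a a = of_real (\<Sum>x\<in>basis n. (cmod (P x a))^2)"
proof -
  have dv: "is_vec n (delta a)" using a by (simp add: is_vec_def delta_def)
  have pa: "app n P (delta a) x = (if length x = n then P x a else 0)" for x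
    using app_delta[OF a] by (simp add: delta_def)
  have "inner n (delta a) (app n P (delta a)) = (\<Sum>x\<in>basis n. if x = a then app n P (delta a) x else 0)"
    unfolding inner_def by (intro sum.cong refl) (simp add: delta_def)
  also have "\<dots> = app n P (delta a) a" using a by simp
  also have "\<dots> = P a a" using a by (simp add: pa)
  finally have "inner n (delta a) (app n P (delta a)) = P a a" .
  moreover have "inner n (app n P (delta a)) (app n P (delta a)) =
      of_real (\<Sum>x\<in>basis n. (cmod (P x a))^2)"
    unfolding inner_self_real by (intro arg_cong[where f = of_real] sum.cong refl) (simp add: pa)
  ultimately show ?thesis using proj_idem_inner[OF P dv] by simp
qed

lemma ker_orth:
  assumes phi: "app n (reduced N n psi) phi = 0" and c: "length c = N - n"
  shows "(\<Sum>a\<in>basis n. cnj (phi a) * psi (a @ c)) = 0"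
proof -
  define g where "g = (\<lambda>z. if length z = N - n then (\<Sum>y\<in>basis n. cnj (psi (y @ z)) * phi y) else 0)"
  have gv: "is_vec (N - n) g" by (simp add: g_def is_vec_def)
  have "0 = inner n phi (app n (reduced N n psi) phi)" using phi by (simp add: inner_def)
  also have "\<dots> = (\<Sum>x\<in>basis n. cnj (phi x) * (\<Sum>z\<in>basis (N - n). g z * psi (x @ z)))"
    unfolding inner_def by (intro sum.cong refl) (auto simp: rho_app sum_fun_apply sc_apply g_def)
  also have "\<dots> = (\<Sum>z\<in>basis (N - n). g z * (\<Sum>x\<in>basis n. cnj (phi x) * psi (x @ z)))"
    by (simp add: sum_distrib_left sum_distrib_right algebra_simps) (rule sum.swap)
  also have "\<dots> = inner (N - n) g g"
    unfolding inner_def by (intro sum.cong refl) (simp add: g_def mult.commute)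
  finally have "g = 0" using inner_self_zero[OF gv] by simp
  hence "g c = 0" by simp
  hence "cnj (g c) = 0" by simp
  thus ?thesis using c by (simp add: g_def mult.commute)
qed



lemma K_subspace: "vs.subspace {phi. sym_vec n phi \<and> app n rho phi = (\<lambda>_. 0)}"
  unfolding vs.subspace_def
proof (intro conjI ballI allI)
  have "app n rho 0 = 0" by (rule app_zero)
  thus "0 \<in> {phi. sym_vec n phi \<and> app n rho phi = (\<lambda>_. 0)}"
    by (simp add: sym_vec_def is_vec_def zero_fun_def)
next
  fix x y assume x: "x \<in> {phi. sym_vec n phi \<and> app n rho phi = (\<lambda>_. 0)}"
    and y: "y \<in> {phi. sym_vec n phi \<and> app n rho phi = (\<lambda>_. 0)}"
  have "app n rho (x + y) = (\<lambda>_. 0)" using x y by (simp add: app_add fun_eq_iff)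
  moreover have "sym_vec n (x + y)" using x y by (simp add: sym_vec_def is_vec_def)
  ultimately show "x + y \<in> {phi. sym_vec n phi \<and> app n rho phi = (\<lambda>_. 0)}" by simp
next
  fix c x assume x: "x \<in> {phi. sym_vec n phi \<and> app n rho phi = (\<lambda>_. 0)}"
  have "app n rho (sc c x) = (\<lambda>_. 0)" using x by (simp add: app_sc fun_eq_iff sc_apply)
  moreover have "sym_vec n (sc c x)" using x by (simp add: sym_vec_def is_vec_def sc_apply)
  ultimately show "sc c x \<in> {phi. sym_vec n phi \<and> app n rho phi = (\<lambda>_. 0)}" by simp
qed

lemma app_opsum:
  assumes "finite I"
  shows "app N (\<lambda>x y. \<Sum>i\<in>I. A i x y) v = (\<Sum>i\<in>I. app N (A i) v)"
proof (rule ext)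
  fix x
  show "app N (\<lambda>x y. \<Sum>i\<in>I. A i x y) v x = (\<Sum>i\<in>I. app N (A i) v) x"
  proof (cases "length x = N")
    case True
    have "app N (\<lambda>x y. \<Sum>i\<in>I. A i x y) v x = (\<Sum>y\<in>basis N. \<Sum>i\<in>I. A i x y * v y)"
      using True by (simp add: app_apply sum_distrib_right)
    also have "\<dots> = (\<Sum>i\<in>I. \<Sum>y\<in>basis N. A i x y * v y)" by (rule sum.swap)
    also have "\<dots> = (\<Sum>i\<in>I. app N (A i) v) x"
      using True by (simp add: app_apply sum_fun_apply)
    finally show ?thesis .
  next
    case False thus ?thesis by (simp add: app_out sum_fun_apply)
  qed
qed

lemma inner_sum_right: "inner n u (\<Sum>i\<in>I. f i) = (\<Sum>i\<in>I. inner n u (f i))"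
  unfolding inner_def sum_fun_apply by (simp add: sum_distrib_left) (rule sum.swap)

theorem mainTheorem9:
  fixes N :: nat and psi :: qvec
  assumes "N \<ge> 2"
    and "sym_vec N psi" and "psi \<noteq> (\<lambda>_. 0)"
  defines "n \<equiv> N div 2 + 1"
  defines "rho \<equiv> reduced N n psi"
  defines "K \<equiv> {phi. sym_vec n phi \<and> app n rho phi = (\<lambda>_. 0)}"
  defines "H \<equiv> (\<lambda>x y. \<Sum>i<N. embed N n i (orth_proj n K) x y)"
  shows "(\<exists>phi. sym_vec n phi \<and> phi \<noteq> (\<lambda>_. 0) \<and> app n rho phi = (\<lambda>_. 0))
    \<and> is_op N H \<and> H \<noteq> (\<lambda>_ _. 0) \<and> psd N H \<and> app N H psi = (\<lambda>_. 0)"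
proof -
  have N0: "N > 0" using assms(1) by simp
  have nN: "n \<le> N" using assms(1) unfolding n_def by linarith
  have nd: "n = N div 2 + 1" unfolding n_def ..
  have "\<exists>phi. sym_vec n phi \<and> phi \<noteq> 0 \<and> app n rho phi = 0"
    unfolding rho_def by (rule kernel_exists[OF assms(1) assms(2) nd])
  then obtain phi0 where phi0: "sym_vec n phi0" "phi0 \<noteq> 0" "app n rho phi0 = 0"
    by (elim exE conjE)
  have part1: "\<exists>phi. sym_vec n phi \<and> phi \<noteq> (\<lambda>_. 0) \<and> app n rho phi = (\<lambda>_. 0)"
    using phi0 unfolding zero_fun_def by blast
  have phi0K: "phi0 \<in> K" using phi0 by (simp add: K_def zero_fun_def)
  have Ksub: "vs.subspace K" unfolding K_def by (rule K_subspace)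
  have Kvec: "\<forall>v\<in>K. is_vec n v" by (simp add: K_def sym_vec_def)
  define P where "P = orth_proj n K"
  have Pp: "is_orth_proj n K P" unfolding P_def by (rule orth_proj_is[OF Ksub Kvec])
  have psdP: "psd n P" by (rule proj_psd[OF Pp])
  have Hdef: "H = (\<lambda>x y. \<Sum>i<N. embed N n i P x y)" by (simp add: H_def P_def)
  have appH: "app N H v = (\<Sum>i<N. app N (embed N n i P) v)" for v
    unfolding Hdef by (rule app_opsum) simp
  have opH: "is_op N H" unfolding is_op_def Hdef
    by (auto simp: embed_def)
  have psirot: "psi (rotate k y) = psi y" if "length y = N" for k y
    by (rule sym_mset[OF assms(2) mset_rotate]) (simp add: that)
  have kill: "app N (embed N n i P) psi = 0" for i
  proof (rule ext)
    fix x
    show "app N (embed N n i P) psi x = 0 x"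
    proof (cases "length x = N")
      case True
      define x' where "x' = rotate i x"
      have lx': "length x' = N" using True by (simp add: x'_def)
      define c where "c = drop n x'"
      have lc: "length c = N - n" using lx' by (simp add: c_def)
      define pc where "pc = (\<lambda>a. if length a = n then psi (a @ c) else 0)"
      have "app N (embed N n i P) psi x = (\<Sum>y\<in>basis N. Fop N n P x' y * psi y)"
        using True by (simp add: app_embed[OF N0 nN] psirot x'_def)
      also have "\<dots> = app n P pc (take n x')"
        unfolding pc_def c_def by (rule F_app[OF lx' nN])
      also have "app n P pc = 0"
      proof (rule proj_kill[OF Pp])
        show "is_vec n pc" by (simp add: pc_def is_vec_def)
      next
        show "\<forall>k\<in>K. inner n k pc = 0"
        proof
          fix k assume "k \<in> K"
          hence "app n (reduced N n psi) k = 0" by (simp add: K_def rho_def zero_fun_def)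
          from ker_orth[OF this lc] show "inner n k pc = 0"
            by (simp add: inner_def pc_def)
        qed
      qed
      finally show ?thesis by simp
    qed (simp add: app_out)
  qed
  have Hpsi: "app N H psi = (\<lambda>_. 0)"
    unfolding appH kill sum.neutral_const by (simp add: zero_fun_def)
  have psdH: "psd N H" unfolding psd_def
  proof (intro allI impI)
    fix v assume "is_vec N v"
    have eq: "inner N v (app N H v) = (\<Sum>i<N. inner N v (app N (embed N n i P) v))"
      unfolding appH by (rule inner_sum_right)
    have each: "Im (inner N v (app N (embed N n i P) v)) = 0 \<and>
        Re (inner N v (app N (embed N n i P) v)) \<ge> 0" for i
      by (rule embed_psd[OF N0 nN psdP])
    show "Im (inner N v (app N H v)) = 0 \<and> 0 \<le> Re (inner N v (app N H v))"
      unfolding eq using each by (simp add: Im_sum Re_sum sum_nonneg)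
  qed
  have "app n P phi0 = phi0" using is_orth_projD(4)[OF Pp phi0K] .
  then obtain b where b: "app n P phi0 b \<noteq> 0" using phi0(2) by (auto simp: fun_eq_iff)
  have lb: "length b = n" using b app_out by metis
  have "(\<Sum>y\<in>basis n. P b y * phi0 y) \<noteq> 0" using b by (simp add: app_apply[OF lb])
  then obtain a where a: "a \<in> basis n" "P b a * phi0 a \<noteq> 0"
    by (meson sum.not_neutral_contains_not_neutral)
  have la: "length a = n" using a by simp
  have Pba: "P b a \<noteq> 0" using a by simp
  have diag_nonneg: "Re (P c c) \<ge> 0" if "length c = n" for c
    using proj_diag[OF Pp that] by (simp add: sum_nonneg)
  have "Re (P a a) = (\<Sum>x\<in>basis n. (cmod (P x a))^2)" using proj_diag[OF Pp la] by simp
  also have "\<dots> \<ge> (cmod (P b a))^2"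
    by (rule member_le_sum) (use lb in auto)
  finally have Paa: "Re (P a a) > 0" using Pba by (smt (verit) zero_less_norm_iff zero_less_power)
  define X where "X = a @ replicate (N - n) False"
  have lX: "length X = N" using la nN by (simp add: X_def)
  have win: "length (window N n i X) = n" for i by (simp add: window_def)
  have HXX: "H X X = (\<Sum>i<N. P (window N n i X) (window N n i X))"
    unfolding Hdef using lX by (simp add: embed_def)
  have w0: "window N n 0 X = a" using window_eq[OF lX nN, of 0] la by (simp add: X_def)
  have "Re (P a a) \<le> (\<Sum>i<N. Re (P (window N n i X) (window N n i X)))"
    using member_le_sum[of 0 "{..<N}" "\<lambda>i. Re (P (window N n i X) (window N n i X))"]
      N0 diag_nonneg[OF win] w0 by simp
  hence "Re (H X X) > 0" using Paa by (simp add: HXX Re_sum)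
  hence Hnz: "H \<noteq> (\<lambda>_ _. 0)" by auto
  show ?thesis using part1 opH Hnz psdH Hpsi by blast
qed

end
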